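(* Let $D$ be a digraph (finite, without loops, parallel arcs or digons) and let $S(D)$ be a skeleton of $D$ that admits a simple dicycle intersection graph. If $v\in V(S(D))$ satisfies $d^{+}_{D}(v)=d^{+}_{S(D)}(v)$, then $v\in SV(D)$, i.e. $|N^{+2}_D(v)|\ge|N^{+}_D(v)|$.
   Context: All digraphs are finite, with no loops, no parallel arcs and no digons (a digon is a pair of arcs $u\to w$, $w\to u$). For a digraph $H$ and vertex $v$, $N^{+}_H(v)$ is the set of out-neighbours of $v$ in $H$, $d^{+}_H(v)=|N^{+}_H(v)|$, and $N^{+2}_H(v)$ is the set of vertices $w\notin N^{+}_H(v)\cup\{v\}$ such that $u\to w$ is an arc of $H$ for some $u\in N^{+}_H(v)$; $SV(H)$ is the set of $v$ with $|N^{+2}_H(v)|\ge|N^{+}_H(v)|$. An Eulerian digraph is a (weakly) connected digraph with at least one arc in which $d^{+}(x)=d^{-}(x)$ for every vertex. A skeleton of $D$ is a maximal Eulerian subdigraph of $D$. A cycle decomposition of an Eulerian digraph is a set of dicycles whose arc sets partition its arc set; its dicycle intersection graph is the multigraph whose vertices are these dicycles, with one edge between distinct dicycles $C,C'$ for each vertex lying on both. An Eulerian digraph admits a simple dicycle intersection graph if it has a cycle decomposition whose dicycle intersection graph has no parallel edges (any two distinct dicycles share at most one vertex). *)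

theory Defs
  imports Main
begin

text \<open>A digraph is a pair (V, A): a finite vertex set V and an arc relation A on V,
  without loops and without digons (hence without parallel arcs, A being a set).\<close>
definition digraph :: "'a set \<Rightarrow> ('a \<times> 'a) set \<Rightarrow> bool" where
  "digraph V A \<longleftrightarrow> finite V \<and> A \<subseteq> V \<times> V \<and> (\<forall>x. (x, x) \<notin> A)
     \<and> (\<forall>u w. (u, w) \<in> A \<longrightarrow> (w, u) \<notin> A)"

definition out_nbrs :: "('a \<times> 'a) set \<Rightarrow> 'a \<Rightarrow> 'a set" where
  "out_nbrs A v = {w. (v, w) \<in> A}"

definition in_nbrs :: "('a \<times> 'a) set \<Rightarrow> 'a \<Rightarrow> 'a set" where
  "in_nbrs A v = {u. (u, v) \<in> A}"

definition outdeg :: "('a \<times> 'a) set \<Rightarrow> 'a \<Rightarrow> nat" where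
  "outdeg A v = card (out_nbrs A v)"

definition indeg :: "('a \<times> 'a) set \<Rightarrow> 'a \<Rightarrow> nat" where
  "indeg A v = card (in_nbrs A v)"

definition second_out_nbrs :: "('a \<times> 'a) set \<Rightarrow> 'a \<Rightarrow> 'a set" where
  "second_out_nbrs A v =
     {w. w \<notin> out_nbrs A v \<and> w \<noteq> v \<and> (\<exists>u \<in> out_nbrs A v. (u, w) \<in> A)}"

definition SV :: "'a set \<Rightarrow> ('a \<times> 'a) set \<Rightarrow> 'a set" where
  "SV V A = {v \<in> V. card (second_out_nbrs A v) \<ge> card (out_nbrs A v)}"

definition subdigraph :: "'a set \<Rightarrow> ('a \<times> 'a) set \<Rightarrow> 'a set \<Rightarrow> ('a \<times> 'a) set \<Rightarrow> bool" where
  "subdigraph W B V A \<longleftrightarrow> W \<subseteq> V \<and> B \<subseteq> A \<and> B \<subseteq> W \<times> W"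

definition weakly_connected :: "'a set \<Rightarrow> ('a \<times> 'a) set \<Rightarrow> bool" where
  "weakly_connected W B \<longleftrightarrow> (\<forall>x \<in> W. \<forall>y \<in> W. (x, y) \<in> (B \<union> B\<inverse>)\<^sup>*)"

definition eulerian :: "'a set \<Rightarrow> ('a \<times> 'a) set \<Rightarrow> bool" where
  "eulerian W B \<longleftrightarrow> B \<subseteq> W \<times> W \<and> weakly_connected W B \<and> B \<noteq> {}
     \<and> (\<forall>x \<in> W. outdeg B x = indeg B x)"

definition skeleton :: "'a set \<Rightarrow> ('a \<times> 'a) set \<Rightarrow> 'a set \<Rightarrow> ('a \<times> 'a) set \<Rightarrow> bool" where
  "skeleton V A W B \<longleftrightarrow> subdigraph W B V A \<and> eulerian W B \<and>
     \<not> (\<exists>W' B'. subdigraph W' B' V A \<and> eulerian W' B' \<and> W \<subseteq> W' \<and> B \<subseteq> B'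
                 \<and> (W, B) \<noteq> (W', B'))"

definition cycle_arcs :: "'a list \<Rightarrow> ('a \<times> 'a) set" where
  "cycle_arcs vs = {(vs ! i, vs ! ((i + 1) mod length vs)) | i. i < length vs}"

definition is_dicycle :: "('a \<times> 'a) set \<Rightarrow> ('a \<times> 'a) set \<Rightarrow> bool" where
  "is_dicycle B C \<longleftrightarrow> (\<exists>vs. distinct vs \<and> length vs \<ge> 2 \<and> C = cycle_arcs vs) \<and> C \<subseteq> B"

definition cycle_vertices :: "('a \<times> 'a) set \<Rightarrow> 'a set" where
  "cycle_vertices C = fst ` C"

definition cycle_decomposition :: "('a \<times> 'a) set \<Rightarrow> ('a \<times> 'a) set set \<Rightarrow> bool" where
  "cycle_decomposition B \<C> \<longleftrightarrow> (\<forall>C \<in> \<C>. is_dicycle B C) \<and> \<Union>\<C> = B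
     \<and> (\<forall>C \<in> \<C>. \<forall>C' \<in> \<C>. C \<noteq> C' \<longrightarrow> C \<inter> C' = {})"

definition admits_simple_dig :: "'a set \<Rightarrow> ('a \<times> 'a) set \<Rightarrow> bool" where
  "admits_simple_dig W B \<longleftrightarrow> eulerian W B \<and> (\<exists>\<C>. cycle_decomposition B \<C> \<and>
     (\<forall>C \<in> \<C>. \<forall>C' \<in> \<C>. C \<noteq> C' \<longrightarrow> card (cycle_vertices C \<inter> cycle_vertices C') \<le> 1))"

end

theory Submission
  imports Defs
begin

lemma mem_cycle_arcs:
  "(x,y) \<in> cycle_arcs vs \<longleftrightarrow> (\<exists>i. i < length vs \<and> x = vs ! i \<and> y = vs ! ((i+1) mod length vs))"
  unfolding cycle_arcs_def by auto

lemma cyc_next: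
  assumes "(x,y) \<in> cycle_arcs vs" shows "\<exists>z. (y,z) \<in> cycle_arcs vs"
proof -
  obtain i where i: "i < length vs" "x = vs ! i" "y = vs ! ((i+1) mod length vs)"
    using assms unfolding mem_cycle_arcs by blast
  define j where "j = (i+1) mod length vs"
  have "length vs > 0" using i(1) by (cases vs) auto
  hence jl: "j < length vs" unfolding j_def by simp
  have "(vs ! j, vs ! ((j+1) mod length vs)) \<in> cycle_arcs vs"
    unfolding mem_cycle_arcs using jl by blast
  thus ?thesis using i(3) unfolding j_def by blast
qed

lemma cyc_uniq:
  assumes "distinct vs" "(x,y) \<in> cycle_arcs vs" "(x,z) \<in> cycle_arcs vs" shows "y = z"
proof -
  obtain i where i: "i < length vs" "x = vs ! i" "y = vs ! ((i+1) mod length vs)"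
    using assms(2) unfolding mem_cycle_arcs by blast
  obtain j where j: "j < length vs" "x = vs ! j" "z = vs ! ((j+1) mod length vs)"
    using assms(3) unfolding mem_cycle_arcs by blast
  have "i = j" using nth_eq_iff_index_eq[OF assms(1) i(1) j(1)] i(2) j(2) by simp
  thus ?thesis using i j by simp
qed

lemma dicyc_next:
  assumes "is_dicycle B C" "(x,y) \<in> C" shows "\<exists>z. (y,z) \<in> C"
proof -
  obtain vs where "C = cycle_arcs vs" using assms(1) unfolding is_dicycle_def by blast
  thus ?thesis using cyc_next assms(2) by simp
qed

lemma dicyc_uniq:
  assumes "is_dicycle B C" "(x,y) \<in> C" "(x,z) \<in> C" shows "y = z"
proof -
  obtain vs where "C = cycle_arcs vs" "distinct vs" using assms(1) unfolding is_dicycle_def by blast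
  thus ?thesis using cyc_uniq assms(2,3) by simp
qed

theorem theorem3p3:
  fixes V :: "'a set" and A :: "('a \<times> 'a) set" and W :: "'a set" and B :: "('a \<times> 'a) set"
    and v :: 'a
  assumes "digraph V A"
    and "skeleton V A W B"
    and "admits_simple_dig W B"
    and "v \<in> W"
    and "outdeg A v = outdeg B v"
  shows "v \<in> SV V A"
proof -
  have finV: "finite V" and AV: "A \<subseteq> V \<times> V" and noloop: "\<And>x. (x,x) \<notin> A"
    and nodig: "\<And>u w. (u,w) \<in> A \<Longrightarrow> (w,u) \<notin> A"
    using assms(1) unfolding digraph_def by auto
  have finA: "finite A" using finV AV by (meson finite_SigmaI finite_subset)
  have BA: "B \<subseteq> A" and WV: "W \<subseteq> V" using assms(2) unfolding skeleton_def subdigraph_def by auto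
  have vV: "v \<in> V" using WV assms(4) by blast
  obtain \<C> where dec: "cycle_decomposition B \<C>"
    and simp1: "\<forall>C \<in> \<C>. \<forall>C' \<in> \<C>. C \<noteq> C' \<longrightarrow> card (cycle_vertices C \<inter> cycle_vertices C') \<le> 1"
    using assms(3) unfolding admits_simple_dig_def by blast
  have cyc: "\<And>C. C \<in> \<C> \<Longrightarrow> is_dicycle B C" and unionB: "\<Union>\<C> = B"
    and disj: "\<And>C C'. C \<in> \<C> \<Longrightarrow> C' \<in> \<C> \<Longrightarrow> C \<noteq> C' \<Longrightarrow> C \<inter> C' = {}"
    using dec unfolding cycle_decomposition_def by auto
  have CB: "\<And>C. C \<in> \<C> \<Longrightarrow> C \<subseteq> B" using cyc unfolding is_dicycle_def by blast
  have finC: "\<And>C. C \<in> \<C> \<Longrightarrow> finite C" using CB BA finA by (meson finite_subset)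
  have vert: "\<And>C x y. C \<in> \<C> \<Longrightarrow> (x,y) \<in> C \<Longrightarrow> x \<in> cycle_vertices C \<and> y \<in> cycle_vertices C"
  proof -
    fix C x y assume h: "C \<in> \<C>" "(x,y) \<in> C"
    obtain z where "(y,z) \<in> C" using dicyc_next[OF cyc[OF h(1)] h(2)] by blast
    have "x \<in> fst ` C" using rev_image_eqI[OF \<open>(x,y) \<in> C\<close>, of x fst] by simp
    moreover have "y \<in> fst ` C" using rev_image_eqI[OF \<open>(y,z) \<in> C\<close>, of y fst] by simp
    ultimately show "x \<in> cycle_vertices C \<and> y \<in> cycle_vertices C"
      unfolding cycle_vertices_def by simp
  qed
  have two: False if "C \<in> \<C>" "C' \<in> \<C>" "C \<noteq> C'" "a \<noteq> b"
    "a \<in> cycle_vertices C" "b \<in> cycle_vertices C" "a \<in> cycle_vertices C'" "b \<in> cycle_vertices C'"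
    for C C' a b
  proof -
    have "finite (cycle_vertices C \<inter> cycle_vertices C')"
      using finC[OF that(1)] unfolding cycle_vertices_def by simp
    hence "card {a,b} \<le> card (cycle_vertices C \<inter> cycle_vertices C')"
      using that by (intro card_mono) auto
    moreover have "card (cycle_vertices C \<inter> cycle_vertices C') \<le> 1" using simp1 that(1-3) by blast
    moreover have "card {a,b} = 2" using that(4) by simp
    ultimately show False by linarith
  qed
  have eqN: "out_nbrs A v = out_nbrs B v"
  proof -
    have sub: "out_nbrs B v \<subseteq> out_nbrs A v" using BA unfolding out_nbrs_def by auto
    have fin: "finite (out_nbrs A v)" using finA unfolding out_nbrs_def
      by (rule finite_subset[rotated, OF finite_imageI[of A snd]]) force
    show ?thesis using card_subset_eq[OF fin sub] assms(5) unfolding outdeg_def by simp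
  qed
  define f where "f u = (SOME w. \<exists>C\<in>\<C>. (v,u) \<in> C \<and> (u,w) \<in> C)" for u
  have fprop: "\<exists>C\<in>\<C>. (v,u) \<in> C \<and> (u,f u) \<in> C" if "u \<in> out_nbrs B v" for u
  proof -
    have "(v,u) \<in> B" using that unfolding out_nbrs_def by simp
    then obtain C where C: "C \<in> \<C>" "(v,u) \<in> C" using unionB by blast
    then obtain w where "(u,w) \<in> C" using dicyc_next[OF cyc[OF C(1)] C(2)] by blast
    hence "\<exists>w. \<exists>C\<in>\<C>. (v,u) \<in> C \<and> (u,w) \<in> C" using C by blast
    thus ?thesis unfolding f_def by (rule someI_ex)
  qed
  have inj: "inj_on f (out_nbrs B v)"
  proof (rule inj_onI)
    fix u1 u2 assume u: "u1 \<in> out_nbrs B v" "u2 \<in> out_nbrs B v" "f u1 = f u2"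
    obtain C1 where C1: "C1 \<in> \<C>" "(v,u1) \<in> C1" "(u1,f u1) \<in> C1" using fprop u by blast
    obtain C2 where C2: "C2 \<in> \<C>" "(v,u2) \<in> C2" "(u2,f u2) \<in> C2" using fprop u by blast
    show "u1 = u2"
    proof (cases "C1 = C2")
      case True thus ?thesis using dicyc_uniq[OF cyc[OF C1(1)] C1(2)] C2(2) by simp
    next
      case False
      have e1: "(v,u1) \<in> A" "(u1, f u1) \<in> A" using C1 CB[OF C1(1)] BA by blast+
      have "f u1 \<noteq> v" using nodig[OF e1(1)] e1(2) by blast
      have a: "v \<in> cycle_vertices C1" "f u1 \<in> cycle_vertices C1"
        using vert[OF C1(1) C1(2)] vert[OF C1(1) C1(3)] by auto
      have b: "v \<in> cycle_vertices C2" "f u1 \<in> cycle_vertices C2"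
        using vert[OF C2(1) C2(2)] vert[OF C2(1) C2(3)] u(3) by auto
      show ?thesis using two[OF C1(1) C2(1) False \<open>f u1 \<noteq> v\<close>[symmetric] a(1) a(2) b(1) b(2)] by blast
    qed
  qed
  have into: "f ` out_nbrs B v \<subseteq> second_out_nbrs A v"
  proof
    fix w assume "w \<in> f ` out_nbrs B v"
    then obtain u where u: "u \<in> out_nbrs B v" "w = f u" by blast
    obtain C where C: "C \<in> \<C>" "(v,u) \<in> C" "(u,w) \<in> C" using fprop u by blast
    have vuA: "(v,u) \<in> A" and uwA: "(u,w) \<in> A" using C CB[OF C(1)] BA by blast+
    have wv: "w \<noteq> v" using nodig[OF vuA] uwA by blast
    have wu: "w \<noteq> u" using uwA noloop by blast
    have wn: "w \<notin> out_nbrs A v"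
    proof
      assume "w \<in> out_nbrs A v"
      hence "(v,w) \<in> B" using eqN unfolding out_nbrs_def by auto
      then obtain C' where C': "C' \<in> \<C>" "(v,w) \<in> C'" using unionB by blast
      show False
      proof (cases "C = C'")
        case True thus False using dicyc_uniq[OF cyc[OF C(1)] C(2)] C'(2) wu by simp
      next
        case False
        have a: "v \<in> cycle_vertices C" "w \<in> cycle_vertices C"
          using vert[OF C(1) C(2)] vert[OF C(1) C(3)] by auto
        have b: "v \<in> cycle_vertices C'" "w \<in> cycle_vertices C'"
          using vert[OF C'(1) C'(2)] by auto
        show False using two[OF C(1) C'(1) False wv[symmetric] a b] .
      qed
    qed
    have "u \<in> out_nbrs A v" using u eqN by simp
    thus "w \<in> second_out_nbrs A v" unfolding second_out_nbrs_def using wv wn uwA by blast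
  qed
  have fin2: "finite (second_out_nbrs A v)" unfolding second_out_nbrs_def
    by (rule finite_subset[OF _ finite_imageI[OF finA, of snd]]) force
  have "card (out_nbrs B v) \<le> card (second_out_nbrs A v)"
    using card_inj_on_le[OF inj into fin2] .
  thus ?thesis unfolding SV_def using vV eqN by simp
qed

end
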